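(* Let $X$ be a real lush Banach space. Then $n_L(X)=1$.
   Context: A real Banach space $X$ is lush if for every $x,y\in S_X$ and every $\varepsilon>0$ there is $y^*\in S_{X^*}$ such that, with the slice $S=S(y^*,\varepsilon)=\{z\in B_X: y^*(z)>1-\varepsilon\}$, one has $y\in S$ and $\mathrm{dist}(x,\mathrm{aco}(S))<\varepsilon$, where $\mathrm{aco}(S)$ is the absolutely convex hull of $S$. $\mathrm{Lip}_0(X)$ is the set of Lipschitz maps $T:X\to X$ with $T(0)=0$, with $\|T\|_L=\sup\{\|Tx-Ty\|/\|x-y\|: x\neq y\}$. $D(x)=\{x^*\in X^*: x^*(x)=\|x^*\|\|x\|=\|x\|^2\}$; $\omega(T)=\sup\{|f(Tx-Ty)|/\|x-y\|^2: x\neq y,\ f\in D(x-y)\}$; $n_L(X)=\inf\{\omega(T): T\in\mathrm{Lip}_0(X),\ \|T\|_L=1\}$. *)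

theory Defs
  imports "HOL-Analysis.Analysis"
begin

definition dual_sphere :: "('a::real_normed_vector \<Rightarrow> real) set" where
  "dual_sphere = {f. bounded_linear f \<and> onorm f = 1}"

definition slice :: "('a::real_normed_vector \<Rightarrow> real) \<Rightarrow> real \<Rightarrow> 'a set" where
  "slice f eps = {z. z \<in> cball 0 1 \<and> f z > 1 - eps}"

definition aco :: "'a::real_vector set \<Rightarrow> 'a set" where
  "aco S = convex hull (S \<union> uminus ` S)"

definition lush :: "'a::real_normed_vector itself \<Rightarrow> bool" where
  "lush _ \<longleftrightarrow> (\<forall>x::'a. \<forall>y::'a. \<forall>eps::real.
      x \<in> sphere 0 1 \<longrightarrow> y \<in> sphere 0 1 \<longrightarrow> eps > 0 \<longrightarrow>
      (\<exists>f\<in>dual_sphere. y \<in> slice f eps \<and> infdist x (aco (slice f eps)) < eps))"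

definition duality_set :: "'a::real_normed_vector \<Rightarrow> ('a \<Rightarrow> real) set" where
  "duality_set x = {f. bounded_linear f \<and> f x = onorm f * norm x \<and> onorm f * norm x = (norm x)\<^sup>2}"

definition Lip0 :: "('a::real_normed_vector \<Rightarrow> 'a) set" where
  "Lip0 = {T. T 0 = 0 \<and> (\<exists>L. lipschitz_on L UNIV T)}"

definition lip_norm :: "('a::real_normed_vector \<Rightarrow> 'a) \<Rightarrow> real" where
  "lip_norm T = Sup {norm (T x - T y) / norm (x - y) | x y. x \<noteq> y}"

definition num_radius_L :: "('a::real_normed_vector \<Rightarrow> 'a) \<Rightarrow> real" where
  "num_radius_L T = Sup {\<bar>f (T x - T y)\<bar> / (norm (x - y))\<^sup>2 | x y f. x \<noteq> y \<and> f \<in> duality_set (x - y)}"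

definition lip_num_index :: "'a::real_normed_vector itself \<Rightarrow> real" where
  "lip_num_index _ = Inf {num_radius_L T | T :: 'a \<Rightarrow> 'a. T \<in> Lip0 \<and> lip_norm T = 1}"

end

theory Submission
  imports Defs
begin

definition hbP :: "'a::real_normed_vector \<Rightarrow> ('a \<times> real) set \<Rightarrow> bool" where
 "hbP u G \<longleftrightarrow> (\<forall>x a b. (x,a)\<in>G \<longrightarrow> (x,b)\<in>G \<longrightarrow> a=b) \<and>
   (\<forall>x a y b. (x,a)\<in>G \<longrightarrow> (y,b)\<in>G \<longrightarrow> (x+y,a+b)\<in>G) \<and>
   (\<forall>x a c. (x,a)\<in>G \<longrightarrow> (c *\<^sub>R x, c*a)\<in>G) \<and>
   (\<forall>x a. (x,a)\<in>G \<longrightarrow> a \<le> norm x) \<and> (u, norm u)\<in>G"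

lemma hbP_init:
  fixes u :: "'a::real_normed_vector"
  assumes "u \<noteq> 0"
  shows "hbP u {(c *\<^sub>R u, c * norm u) | c. True}"
  unfolding hbP_def
proof (intro conjI allI impI)
  fix x a b assume "(x,a) \<in> {(c *\<^sub>R u, c * norm u) | c. True}" "(x,b) \<in> {(c *\<^sub>R u, c * norm u) | c. True}"
  then obtain c d where h: "x = c *\<^sub>R u" "a = c * norm u" "x = d *\<^sub>R u" "b = d * norm u" by blast
  then have "c = d" using assms by (metis scaleR_cancel_right)
  then show "a = b" using h by simp
next
  fix x a y b assume "(x,a) \<in> {(c *\<^sub>R u, c * norm u) | c. True}" "(y,b) \<in> {(c *\<^sub>R u, c * norm u) | c. True}"
  then obtain c d where "x = c *\<^sub>R u" "a = c * norm u" "y = d *\<^sub>R u" "b = d * norm u" by auto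
  then show "(x+y, a+b) \<in> {(c *\<^sub>R u, c * norm u) | c. True}"
    by (auto intro!: exI[of _ "c+d"] simp: algebra_simps scaleR_add_left)
next
  fix x a e assume "(x,a) \<in> {(c *\<^sub>R u, c * norm u) | c. True}"
  then obtain c where "x = c *\<^sub>R u" "a = c * norm u" by auto
  then show "(e *\<^sub>R x, e*a) \<in> {(c *\<^sub>R u, c * norm u) | c. True}"
    by (auto intro!: exI[of _ "e*c"])
next
  fix x a assume "(x,a) \<in> {(c *\<^sub>R u, c * norm u) | c. True}"
  then obtain c where "x = c *\<^sub>R u" "a = c * norm u" by auto
  then show "a \<le> norm x" by (simp add: mult_right_mono)
next
  show "(u, norm u) \<in> {(c *\<^sub>R u, c * norm u) | c. True}" by (auto intro!: exI[of _ 1])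
qed

lemma hbP_Union:
  assumes C: "C \<in> chains {G. hbP u G}" and ne: "C \<noteq> {}"
  shows "hbP u (\<Union>C)"
proof -
  have sub: "\<And>G. G \<in> C \<Longrightarrow> hbP u G" using C by (auto dest: chainsD2)
  have two: "\<And>p q. p \<in> \<Union>C \<Longrightarrow> q \<in> \<Union>C \<Longrightarrow> \<exists>G\<in>C. p \<in> G \<and> q \<in> G"
  proof -
    fix p q assume "p \<in> \<Union>C" "q \<in> \<Union>C"
    then obtain G1 G2 where "G1\<in>C" "G2\<in>C" "p\<in>G1" "q\<in>G2" by auto
    then show "\<exists>G\<in>C. p \<in> G \<and> q \<in> G" using chainsD[OF C \<open>G1\<in>C\<close> \<open>G2\<in>C\<close>] by blast
  qed
  show ?thesis unfolding hbP_def
  proof (intro conjI allI impI)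
    fix x a b assume "(x,a)\<in>\<Union>C" "(x,b)\<in>\<Union>C"
    then obtain G where "G\<in>C" "(x,a)\<in>G" "(x,b)\<in>G" using two by blast
    then show "a = b" using sub[of G] unfolding hbP_def by blast
  next
    fix x a y b assume "(x,a)\<in>\<Union>C" "(y,b)\<in>\<Union>C"
    then obtain G where "G\<in>C" "(x,a)\<in>G" "(y,b)\<in>G" using two by blast
    then show "(x+y,a+b)\<in>\<Union>C" using sub[of G] unfolding hbP_def by blast
  next
    fix x a c assume "(x,a)\<in>\<Union>C"
    then obtain G where "G\<in>C" "(x,a)\<in>G" by blast
    then show "(c *\<^sub>R x, c*a)\<in>\<Union>C" using sub[of G] unfolding hbP_def by blast
  next
    fix x a assume "(x,a)\<in>\<Union>C"
    then obtain G where "G\<in>C" "(x,a)\<in>G" by blast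
    then show "a \<le> norm x" using sub[of G] unfolding hbP_def by blast
  next
    obtain G where "G \<in> C" using ne by blast
    then show "(u, norm u) \<in> \<Union>C" using sub[of G] unfolding hbP_def by blast
  qed
qed

lemma hbP_extend:
  fixes u w :: "'a::real_normed_vector"
  assumes P: "hbP u G" and w: "\<forall>a. (w,a) \<notin> G"
  shows "\<exists>G'. hbP u G' \<and> G \<subseteq> G' \<and> G' \<noteq> G"
proof -
  have fn: "\<And>x a b. (x,a)\<in>G \<Longrightarrow> (x,b)\<in>G \<Longrightarrow> a=b"
    and add: "\<And>x a y b. (x,a)\<in>G \<Longrightarrow> (y,b)\<in>G \<Longrightarrow> (x+y,a+b)\<in>G"
    and sc: "\<And>x a c. (x,a)\<in>G \<Longrightarrow> (c *\<^sub>R x, c*a)\<in>G"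
    and bd: "\<And>x a. (x,a)\<in>G \<Longrightarrow> a \<le> norm x"
    and uG: "(u, norm u)\<in>G" using P unfolding hbP_def by blast+
  have zero: "(0,0) \<in> G" using sc[OF uG, of 0] by simp
  define K where "K = {a - norm (x - w) | x a. (x,a)\<in>G}"
  define k where "k = Sup K"
  have key: "\<And>x a y b. (x,a)\<in>G \<Longrightarrow> (y,b)\<in>G \<Longrightarrow> a - norm (x - w) \<le> norm (y + w) - b"
  proof -
    fix x a y b assume "(x,a)\<in>G" "(y,b)\<in>G"
    then have "a + b \<le> norm (x + y)" using bd add by blast
    also have "norm (x + y) \<le> norm (x - w) + norm (y + w)"
      using norm_triangle_ineq[of "x - w" "y + w"] by simp
    finally show "a - norm (x - w) \<le> norm (y + w) - b" by simp
  qed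
  have Kne: "K \<noteq> {}" using zero unfolding K_def by blast
  have Kbdd: "bdd_above K" unfolding K_def bdd_above_def
    using key[OF _ zero] by auto
  have k_ge: "\<And>x a. (x,a)\<in>G \<Longrightarrow> a - norm (x - w) \<le> k"
    unfolding k_def by (rule cSup_upper[OF _ Kbdd]) (auto simp: K_def)
  have k_le: "\<And>y b. (y,b)\<in>G \<Longrightarrow> k \<le> norm (y + w) - b"
    unfolding k_def by (rule cSup_least[OF Kne]) (auto simp: K_def intro: key)
  define G' where "G' = {(x + c *\<^sub>R w, a + c * k) | x a c. (x,a)\<in>G}"
  have "hbP u G'" unfolding hbP_def
  proof (intro conjI allI impI)
    fix z p q assume "(z,p)\<in>G'" "(z,q)\<in>G'"
    then obtain x a c x' a' c' where h: "(x,a)\<in>G" "(x',a')\<in>G" "z = x + c *\<^sub>R w" "p = a + c*k"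
      "z = x' + c' *\<^sub>R w" "q = a' + c'*k" unfolding G'_def by blast
    have "c = c'"
    proof (rule ccontr)
      assume "c \<noteq> c'"
      have "(x + (-1) *\<^sub>R x', a + (-1)*a') \<in> G" using add[OF h(1) sc[OF h(2)]] .
      then have "((1/(c'-c)) *\<^sub>R (x - x'), (1/(c'-c)) * (a - a')) \<in> G" using sc by (simp only: scaleR_minus1_left mult_minus1 diff_conv_add_uminus[symmetric])
      moreover have "(1/(c'-c)) *\<^sub>R (x - x') = w"
      proof -
        have "x - x' = (c' - c) *\<^sub>R w" using h(3,5) by (simp add: algebra_simps)
        then show ?thesis using \<open>c \<noteq> c'\<close> by simp
      qed
      ultimately show False using w by metis
    qed
    then have "x = x'" using h by simp
    then have "a = a'" using fn h by blast
    then show "p = q" using h \<open>c = c'\<close> by simp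
  next
    fix z p z' q assume "(z,p)\<in>G'" "(z',q)\<in>G'"
    then obtain x a c x' a' c' where h: "(x,a)\<in>G" "(x',a')\<in>G" "z = x + c *\<^sub>R w" "p = a + c*k"
      "z' = x' + c' *\<^sub>R w" "q = a' + c'*k" unfolding G'_def by blast
    have "z + z' = (x + x') + (c + c') *\<^sub>R w" "p + q = (a + a') + (c + c') * k"
      using h by (simp_all add: algebra_simps)
    then show "(z+z', p+q)\<in>G'" unfolding G'_def using add[OF h(1,2)] by blast
  next
    fix z p e assume "(z,p)\<in>G'"
    then obtain x a c where h: "(x,a)\<in>G" "z = x + c *\<^sub>R w" "p = a + c*k"
      unfolding G'_def by blast
    have "e *\<^sub>R z = e *\<^sub>R x + (e*c) *\<^sub>R w" "e * p = e * a + (e*c) * k"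
      using h by (simp_all add: algebra_simps)
    then show "(e *\<^sub>R z, e*p)\<in>G'" unfolding G'_def using sc[OF h(1)] by blast
  next
    fix z p assume "(z,p)\<in>G'"
    then obtain x a c where h: "(x,a)\<in>G" "z = x + c *\<^sub>R w" "p = a + c*k"
      unfolding G'_def by blast
    consider "c = 0" | "c > 0" | "c < 0" by linarith
    then show "p \<le> norm z"
    proof cases
      case 1 then show ?thesis using h bd by simp
    next
      case 2
      have "k \<le> norm ((1/c) *\<^sub>R x + w) - (1/c) * a" using k_le[OF sc[OF h(1), of "1/c"]] .
      then have "c * k \<le> c * (norm ((1/c) *\<^sub>R x + w) - (1/c) * a)" using 2 by (simp add: mult_left_mono)
      also have "\<dots> = c * norm ((1/c) *\<^sub>R x + w) - a" using 2 by (simp add: algebra_simps)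
      also have "c * norm ((1/c) *\<^sub>R x + w) = norm (c *\<^sub>R ((1/c) *\<^sub>R x + w))"
        using 2 by (simp only: norm_scaleR abs_of_pos)
      also have "c *\<^sub>R ((1/c) *\<^sub>R x + w) = z" using 2 h by (simp add: algebra_simps)
      finally show ?thesis using h by simp
    next
      case 3
      define d where "d = - c"
      have d: "d > 0" using 3 d_def by simp
      have "(1/d) * a - norm ((1/d) *\<^sub>R x - w) \<le> k" using k_ge[OF sc[OF h(1), of "1/d"]] .
      then have "d * ((1/d) * a - norm ((1/d) *\<^sub>R x - w)) \<le> d * k" using d by (simp add: mult_left_mono)
      moreover have "d * ((1/d) * a - norm ((1/d) *\<^sub>R x - w)) = a - d * norm ((1/d) *\<^sub>R x - w)"
        using d by (simp add: algebra_simps)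
      moreover have "d * norm ((1/d) *\<^sub>R x - w) = norm (d *\<^sub>R ((1/d) *\<^sub>R x - w))"
        using d by (simp only: norm_scaleR abs_of_pos)
      moreover have "d *\<^sub>R ((1/d) *\<^sub>R x - w) = z" using d h d_def by (simp add: algebra_simps)
      ultimately have "a - norm z \<le> d * k" by metis
      then show ?thesis using h d_def by simp
    qed
  next
    show "(u, norm u) \<in> G'" unfolding G'_def using uG by force
  qed
  moreover have "G \<subseteq> G'" unfolding G'_def by force
  moreover have "(w, k) \<in> G'" unfolding G'_def using zero by force
  ultimately show ?thesis using w by blast
qed

lemma hahn_banach_norming:
  fixes u :: "'a::real_normed_vector"
  assumes "u \<noteq> 0"
  shows "\<exists>f. bounded_linear f \<and> onorm f = 1 \<and> f u = norm u"
proof -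
  have "\<exists>M\<in>{G. hbP u G}. \<forall>X\<in>{G. hbP u G}. M \<subseteq> X \<longrightarrow> X = M"
  proof (rule Zorn_Lemma2, intro ballI)
    fix C assume C: "C \<in> chains {G. hbP u G}"
    show "\<exists>U\<in>{G. hbP u G}. \<forall>X\<in>C. X \<subseteq> U"
    proof (cases "C = {}")
      case True then show ?thesis using hbP_init[OF assms] by blast
    next
      case False then show ?thesis using hbP_Union[OF C False] by blast
    qed
  qed
  then obtain M where PM: "hbP u M" and max: "\<And>X. hbP u X \<Longrightarrow> M \<subseteq> X \<Longrightarrow> X = M" by blast
  have fn: "\<And>x a b. (x,a)\<in>M \<Longrightarrow> (x,b)\<in>M \<Longrightarrow> a=b"
    and add: "\<And>x a y b. (x,a)\<in>M \<Longrightarrow> (y,b)\<in>M \<Longrightarrow> (x+y,a+b)\<in>M"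
    and sc: "\<And>x a c. (x,a)\<in>M \<Longrightarrow> (c *\<^sub>R x, c*a)\<in>M"
    and bd: "\<And>x a. (x,a)\<in>M \<Longrightarrow> a \<le> norm x"
    and uM: "(u, norm u)\<in>M" using PM unfolding hbP_def by blast+
  have tot: "\<And>x. \<exists>a. (x,a) \<in> M"
  proof (rule ccontr)
    fix x assume "\<nexists>a. (x,a) \<in> M"
    then obtain G' where "hbP u G'" "M \<subseteq> G'" "G' \<noteq> M" using hbP_extend[OF PM] by blast
    then show False using max by blast
  qed
  define f where "f x = (THE a. (x,a) \<in> M)" for x
  have fM: "\<And>x. (x, f x) \<in> M"
  proof -
    fix x obtain a where a: "(x,a)\<in>M" using tot by blast
    then have "f x = a" unfolding f_def using fn by blast
    then show "(x, f x) \<in> M" using a by simp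
  qed
  have fval: "\<And>x a. (x,a)\<in>M \<Longrightarrow> f x = a" using fM fn by blast
  have fadd: "\<And>x y. f (x + y) = f x + f y" using fval add fM by blast
  have fsc: "\<And>c x. f (c *\<^sub>R x) = c *\<^sub>R f x" using fval sc fM by fastforce
  have fb: "\<And>x. norm (f x) \<le> norm x * 1"
  proof -
    fix x
    have "f x \<le> norm x" using bd fM by blast
    moreover have "- f x \<le> norm x" using bd[OF fM[of "-x"]] fsc[of "-1" x] by simp
    ultimately show "norm (f x) \<le> norm x * 1" by simp
  qed
  have bl: "bounded_linear f" by (rule bounded_linear_intro[OF fadd fsc fb])
  have fu: "f u = norm u" using fval uM by blast
  have "onorm f \<le> 1" by (rule onorm_bound) (use fb in auto)
  moreover have "norm (f u) / norm u \<le> onorm f" by (rule le_onorm[OF bl])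
  then have "1 \<le> onorm f" using fu assms by simp
  ultimately show ?thesis using bl fu by auto
qed


lemma dual_exists:
  fixes u :: "'a::real_normed_vector"
  assumes "u \<noteq> 0" shows "\<exists>f. f \<in> duality_set u"
proof -
  obtain g where g: "bounded_linear g" "onorm g = 1" "g u = norm u"
    using hahn_banach_norming[OF assms] by blast
  define f where "f x = norm u *\<^sub>R g x" for x
  have bl: "bounded_linear f" unfolding f_def by (rule bounded_linear_compose[OF bounded_linear_scaleR_right g(1)])
  have "onorm f = norm u" unfolding f_def using onorm_scaleR[OF g(1), of "norm u"] g(2) by simp
  moreover have "f u = norm u * norm u" unfolding f_def using g(3) by simp
  ultimately have "f \<in> duality_set u" using bl unfolding duality_set_def by (simp add: power2_eq_square)
  then show ?thesis by blast
qed

lemma dual_props: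
  fixes u :: "'a::real_normed_vector"
  assumes "f \<in> duality_set u" "u \<noteq> 0"
  shows "bounded_linear f" "onorm f = norm u" "f u = (norm u)\<^sup>2"
proof -
  show bl: "bounded_linear f" using assms unfolding duality_set_def by simp
  have "onorm f * norm u = norm u * norm u" using assms unfolding duality_set_def by (simp add: power2_eq_square)
  then show "onorm f = norm u" using assms(2) by simp
  show "f u = (norm u)\<^sup>2" using assms unfolding duality_set_def by simp
qed

lemma lip1:
  fixes T :: "'a::real_normed_vector \<Rightarrow> 'a"
  assumes "T \<in> Lip0" "lip_norm T = 1"
  shows "norm (T x - T y) \<le> norm (x - y)"
proof (cases "x = y")
  case True then show ?thesis by simp
next
  case False
  obtain L where L: "lipschitz_on L UNIV T" using assms unfolding Lip0_def by blast
  have bdd: "bdd_above {norm (T x - T y) / norm (x - y) | x y. x \<noteq> y}"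
    unfolding bdd_above_def
  proof (intro exI[of _ L] ballI)
    fix r assume "r \<in> {norm (T x - T y) / norm (x - y) | x y. x \<noteq> y}"
    then obtain a b where r: "r = norm (T a - T b) / norm (a - b)" "a \<noteq> b" by blast
    have "norm (T a - T b) \<le> L * norm (a - b)" using lipschitz_onD[OF L, of a b] by (simp add: dist_norm)
    then show "r \<le> L" using r by (simp add: divide_le_eq)
  qed
  have "norm (T x - T y) / norm (x - y) \<le> lip_norm T"
    unfolding lip_norm_def by (rule cSup_upper[OF _ bdd]) (use False in blast)
  then show ?thesis using assms False by (simp add: divide_le_eq)
qed

lemma lipnear:
  fixes T :: "'a::real_normed_vector \<Rightarrow> 'a"
  assumes "lip_norm T = 1" "\<exists>x::'a. x \<noteq> 0" "e > 0"
  shows "\<exists>x y. x \<noteq> y \<and> (1 - e) * norm (x - y) < norm (T x - T y)"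
proof -
  obtain x0 :: 'a where "x0 \<noteq> 0" using assms by blast
  have ne: "{norm (T x - T y) / norm (x - y) | x y. x \<noteq> y} \<noteq> {}" using \<open>x0 \<noteq> 0\<close> by blast
  have "1 - e < Sup {norm (T x - T y) / norm (x - y) | x y. x \<noteq> y}"
    using assms unfolding lip_norm_def by simp
  then obtain r where "r \<in> {norm (T x - T y) / norm (x - y) | x y. x \<noteq> y}" "1 - e < r"
    using less_cSupE[OF _ ne] by blast
  then obtain x y where "x \<noteq> y" "1 - e < norm (T x - T y) / norm (x - y)" by blast
  then show ?thesis by (intro exI[of _ x] exI[of _ y]) (simp add: less_divide_eq)
qed

lemma omega_props:
  fixes T :: "'a::real_normed_vector \<Rightarrow> 'a"
  assumes L1: "\<And>x y. norm (T x - T y) \<le> norm (x - y)" and nt: "\<exists>x::'a. x \<noteq> 0"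
  shows "num_radius_L T \<le> 1" "0 \<le> num_radius_L T"
    "\<And>(x::'a) y f. x \<noteq> y \<Longrightarrow> f \<in> duality_set (x - y) \<Longrightarrow> \<bar>f (T x - T y)\<bar> \<le> num_radius_L T * (norm (x - y))\<^sup>2"
proof -
  define W where "W = {\<bar>f (T x - T y)\<bar> / (norm (x - y))\<^sup>2 | x y f. x \<noteq> y \<and> f \<in> duality_set (x - y)}"
  have nr: "num_radius_L T = Sup W" unfolding W_def num_radius_L_def ..
  have le1: "\<And>r. r \<in> W \<Longrightarrow> r \<le> 1"
  proof -
    fix r assume "r \<in> W"
    then obtain x y f where h: "r = \<bar>f (T x - T y)\<bar> / (norm (x - y))\<^sup>2" "x \<noteq> y" "f \<in> duality_set (x - y)"
      unfolding W_def by blast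
    have u: "x - y \<noteq> 0" using h by simp
    have "\<bar>f (T x - T y)\<bar> \<le> onorm f * norm (T x - T y)"
      using onorm[OF dual_props(1)[OF h(3) u]] by simp
    also have "\<dots> \<le> norm (x - y) * norm (x - y)"
      using dual_props(2)[OF h(3) u] L1[of x y] by (simp add: mult_left_mono)
    finally show "r \<le> 1" using h u by (simp add: power2_eq_square divide_le_eq)
  qed
  have bdd: "bdd_above W" using le1 unfolding bdd_above_def by blast
  obtain x0 :: 'a where x0: "x0 \<noteq> 0" using nt by blast
  obtain f0 where f0: "f0 \<in> duality_set x0" using dual_exists[OF x0] by blast
  have mem: "\<bar>f0 (T x0 - T 0)\<bar> / (norm (x0 - 0))\<^sup>2 \<in> W" unfolding W_def using x0 f0 by force
  then have ne: "W \<noteq> {}" by blast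
  show "num_radius_L T \<le> 1" unfolding nr by (rule cSup_least[OF ne le1])
  have "0 \<le> \<bar>f0 (T x0 - T 0)\<bar> / (norm (x0 - 0))\<^sup>2" by simp
  also have "\<dots> \<le> Sup W" by (rule cSup_upper[OF mem bdd])
  finally show "0 \<le> num_radius_L T" unfolding nr .
  fix x y :: 'a and f assume h: "x \<noteq> y" "f \<in> duality_set (x - y)"
  have "\<bar>f (T x - T y)\<bar> / (norm (x - y))\<^sup>2 \<le> Sup W"
    by (rule cSup_upper[OF _ bdd]) (use h in \<open>auto simp: W_def\<close>)
  then show "\<bar>f (T x - T y)\<bar> \<le> num_radius_L T * (norm (x - y))\<^sup>2"
    using h unfolding nr by (simp add: divide_le_eq)
qed

lemma lowerb:
  fixes T :: "'a::real_normed_vector \<Rightarrow> 'a"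
  assumes L1: "\<And>x y. norm (T x - T y) \<le> norm (x - y)" and nt: "\<exists>x::'a. x \<noteq> 0"
  shows "(1 - \<bar>s\<bar> * num_radius_L T) * norm (p - q) \<le> norm ((p - q) - s *\<^sub>R (T p - T q))"
proof (cases "p = q")
  case True then show ?thesis by simp
next
  case False
  define u where "u = p - q"
  define v where "v = T p - T q"
  define w where "w = num_radius_L T"
  have u: "u \<noteq> 0" using False u_def by simp
  obtain f where f: "f \<in> duality_set u" using dual_exists[OF u] by blast
  have bl: "bounded_linear f" and on: "onorm f = norm u" and fu: "f u = (norm u)\<^sup>2"
    using dual_props[OF f u] by auto
  have fv: "\<bar>f v\<bar> \<le> w * (norm u)\<^sup>2" using omega_props(3)[OF L1 nt False] f u_def v_def w_def by simp
  have "f (u - s *\<^sub>R v) = f u - s * f v"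
  proof -
    interpret f: bounded_linear f by (rule bl)
    show ?thesis by (simp add: f.diff f.scaleR)
  qed
  also have "\<dots> \<ge> (norm u)\<^sup>2 - \<bar>s\<bar> * (w * (norm u)\<^sup>2)"
  proof -
    have "s * f v \<le> \<bar>s\<bar> * \<bar>f v\<bar>" by (metis abs_ge_self abs_mult)
    also have "\<dots> \<le> \<bar>s\<bar> * (w * (norm u)\<^sup>2)" using fv by (simp add: mult_left_mono)
    finally show ?thesis using fu by simp
  qed
  finally have A: "(norm u)\<^sup>2 - \<bar>s\<bar> * (w * (norm u)\<^sup>2) \<le> f (u - s *\<^sub>R v)" .
  have "f (u - s *\<^sub>R v) \<le> norm u * norm (u - s *\<^sub>R v)"
    using onorm[OF bl, of "u - s *\<^sub>R v"] on by simp
  with A have "norm u * ((1 - \<bar>s\<bar> * w) * norm u) \<le> norm u * norm (u - s *\<^sub>R v)"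
    by (simp add: power2_eq_square algebra_simps)
  then have "(1 - \<bar>s\<bar> * w) * norm u \<le> norm (u - s *\<^sub>R v)" using u by simp
  then show ?thesis unfolding u_def v_def w_def .
qed


lemma lush_step:
  fixes T :: "'a::real_normed_vector \<Rightarrow> 'a"
  assumes lush: "lush TYPE('a)" and L1: "\<And>x y. norm (T x - T y) \<le> norm (x - y)"
    and xy: "x \<noteq> y" "(1 - e) * norm (x - y) < norm (T x - T y)" and e: "0 < e" "e < 1"
  shows "\<exists>f a z l. bounded_linear f \<and> onorm f = 1 \<and> norm z \<le> 1 \<and> f z > 1 - e \<and> l > 0 \<and>
           \<bar>f (T (a + l *\<^sub>R z) - T a)\<bar> > (1 - 3*e) * l"
proof -
  define r where "r = norm (x - y)"
  have r: "r > 0" using xy r_def by simp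
  define v where "v = (1/r) *\<^sub>R (x - y)"
  have vn: "v \<in> sphere 0 1" using r unfolding v_def r_def by simp
  have xyv: "x - y = r *\<^sub>R v" using r unfolding v_def by simp
  define m where "m = norm (T x - T y)"
  have m: "m > (1 - e) * r" using xy m_def r_def by simp
  have mpos: "m > 0" using m e r by (smt (verit) mult_pos_pos)
  define w where "w = (1/m) *\<^sub>R (T x - T y)"
  have wn: "w \<in> sphere 0 1" using mpos unfolding w_def m_def by simp
  have Tw: "T x - T y = m *\<^sub>R w" using mpos unfolding w_def by simp
  obtain f where f: "f \<in> dual_sphere" "w \<in> slice f e" "infdist v (aco (slice f e)) < e"
    using lush vn wn e unfolding lush_def by blast
  have bl: "bounded_linear f" and on: "onorm f = 1" using f unfolding dual_sphere_def by auto
  interpret f: bounded_linear f by (rule bl)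
  have fle: "\<And>z. \<bar>f z\<bar> \<le> norm z" using onorm[OF bl] on by simp
  have fw: "f w > 1 - e" using f unfolding slice_def by simp
  have wa: "w \<in> aco (slice f e)" using f(2) unfolding aco_def by (meson UnI1 hull_subset subsetD)
  have "\<exists>c\<in>aco (slice f e). dist v c < e"
  proof -
    have "(INF c\<in>aco (slice f e). dist v c) < e" using f(3) wa infdist_notempty[of "aco (slice f e)" v] by (metis empty_iff)
    moreover have "bdd_below ((\<lambda>c. dist v c) ` aco (slice f e))" by (rule bdd_belowI[of _ 0]) auto
    ultimately show ?thesis using cINF_less_iff[of "aco (slice f e)"] wa by blast
  qed
  then obtain c where c: "c \<in> aco (slice f e)" "dist v c < e" by blast
  show ?thesis
  proof (rule ccontr)
    assume "\<not> ?thesis"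
    then have H: "\<And>a z l. norm z \<le> 1 \<Longrightarrow> f z > 1 - e \<Longrightarrow> l > 0 \<Longrightarrow>
           \<bar>f (T (a + l *\<^sub>R z) - T a)\<bar> \<le> (1 - 3*e) * l" using bl on by (meson not_less)
    define Hs where "Hs = {c. \<forall>l\<ge>0. \<forall>p. f (T (p + l *\<^sub>R c) - T p) \<le> (1 - 3*e) * l}"
    have s1: "slice f e \<subseteq> Hs"
    proof
      fix z assume "z \<in> slice f e"
      then have z: "norm z \<le> 1" "f z > 1 - e" unfolding slice_def by auto
      show "z \<in> Hs" unfolding Hs_def
      proof (intro CollectI allI impI)
        fix l p :: _ assume "(l::real) \<ge> 0"
        show "f (T (p + l *\<^sub>R z) - T p) \<le> (1 - 3*e) * l"
        proof (cases "l = 0")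
          case True then show ?thesis by (simp add: f.zero)
        next
          case False then show ?thesis using H[OF z, of l p] \<open>l \<ge> 0\<close> by simp
        qed
      qed
    qed
    have s2: "uminus ` slice f e \<subseteq> Hs"
    proof
      fix c assume "c \<in> uminus ` slice f e"
      then obtain z where zc: "c = - z" and "z \<in> slice f e" by blast
      then have z: "norm z \<le> 1" "f z > 1 - e" unfolding slice_def by auto
      show "c \<in> Hs" unfolding Hs_def
      proof (intro CollectI allI impI)
        fix l p :: _ assume "(l::real) \<ge> 0"
        show "f (T (p + l *\<^sub>R c) - T p) \<le> (1 - 3*e) * l"
        proof (cases "l = 0")
          case True then show ?thesis by (simp add: f.zero)
        next
          case False
          have "\<bar>f (T ((p - l *\<^sub>R z) + l *\<^sub>R z) - T (p - l *\<^sub>R z))\<bar> \<le> (1 - 3*e) * l"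
            using H[OF z, of l "p - l *\<^sub>R z"] False \<open>l \<ge> 0\<close> by simp
          moreover have "f (T (p + l *\<^sub>R c) - T p) = - f (T ((p - l *\<^sub>R z) + l *\<^sub>R z) - T (p - l *\<^sub>R z))"
            using zc by (simp add: f.diff)
          ultimately show ?thesis by linarith
        qed
      qed
    qed
    have cv: "convex Hs" unfolding convex_def
    proof (intro ballI allI impI)
      fix c1 c2 and u v :: real assume c12: "c1 \<in> Hs" "c2 \<in> Hs" and uv: "0 \<le> u" "0 \<le> v" "u + v = 1"
      show "u *\<^sub>R c1 + v *\<^sub>R c2 \<in> Hs" unfolding Hs_def
      proof (intro CollectI allI impI)
        fix l p assume l: "(l::real) \<ge> 0"
        have e1: "p + l *\<^sub>R (u *\<^sub>R c1 + v *\<^sub>R c2) = (p + (l * u) *\<^sub>R c1) + (l * v) *\<^sub>R c2"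
          by (simp add: algebra_simps)
        have A: "f (T ((p + (l * u) *\<^sub>R c1) + (l * v) *\<^sub>R c2) - T (p + (l * u) *\<^sub>R c1)) \<le> (1 - 3*e) * (l * v)"
          using c12(2) l uv unfolding Hs_def by simp
        have B: "f (T (p + (l * u) *\<^sub>R c1) - T p) \<le> (1 - 3*e) * (l * u)"
          using c12(1) l uv unfolding Hs_def by simp
        have "f (T (p + l *\<^sub>R (u *\<^sub>R c1 + v *\<^sub>R c2)) - T p) =
            f (T ((p + (l * u) *\<^sub>R c1) + (l * v) *\<^sub>R c2) - T (p + (l * u) *\<^sub>R c1)) + f (T (p + (l * u) *\<^sub>R c1) - T p)"
          unfolding e1 by (simp add: f.diff)
        also have "\<dots> \<le> (1 - 3*e) * (l * v) + (1 - 3*e) * (l * u)" using A B by linarith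
        also have "\<dots> = (1 - 3*e) * (l * (u + v))" by (simp add: algebra_simps)
        also have "\<dots> = (1 - 3*e) * l" using uv by simp
        finally show "f (T (p + l *\<^sub>R (u *\<^sub>R c1 + v *\<^sub>R c2)) - T p) \<le> (1 - 3*e) * l" .
      qed
    qed
    have "aco (slice f e) \<subseteq> Hs" unfolding aco_def
      by (rule hull_minimal) (use s1 s2 cv in auto)
    then have cH: "f (T (y + r *\<^sub>R c) - T y) \<le> (1 - 3*e) * r" using c(1) r unfolding Hs_def by auto
    have d1: "norm (T (y + r *\<^sub>R c) - T x) < r * e"
    proof -
      have "norm (T (y + r *\<^sub>R c) - T x) \<le> norm ((y + r *\<^sub>R c) - x)" by (rule L1)
      also have "(y + r *\<^sub>R c) - x = r *\<^sub>R (c - v)" using xyv by (simp add: algebra_simps)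
      also have "norm (r *\<^sub>R (c - v)) = r * dist c v" using r by (simp add: dist_norm)
      also have "\<dots> < r * e" using c(2) r by (simp add: dist_commute)
      finally show ?thesis .
    qed
    have "f (T x - T y) = m * f w" using Tw by (simp add: f.scaleR)
    also have "m * f w \<ge> m * (1 - e)" using fw mpos by simp
    finally have "f (T x - T y) \<ge> m * (1 - e)" .
    moreover have "m * (1 - e) > (1 - e) * r * (1 - e)" using m e by (simp add: mult.commute)
    moreover have "f (T (y + r *\<^sub>R c) - T y) = f (T x - T y) + f (T (y + r *\<^sub>R c) - T x)"
      by (simp add: f.diff)
    moreover have "f (T (y + r *\<^sub>R c) - T x) \<ge> - (r * e)" using fle[of "T (y + r *\<^sub>R c) - T x"] d1 by linarith
    ultimately have "(1 - e) * r * (1 - e) - r * e < (1 - 3*e) * r" using cH by linarith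
    moreover have "(1 - e) * r * (1 - e) - r * e = (1 - 3*e) * r + r * e * e" by (simp add: algebra_simps)
    moreover have "r * e * e > 0" using r e by simp
    ultimately show False by linarith
  qed
qed


lemma key:
  fixes T :: "'a::banach \<Rightarrow> 'a"
  assumes lush: "lush TYPE('a)" and nt: "\<exists>x::'a. x \<noteq> 0"
    and Lip: "T \<in> Lip0" "lip_norm T = 1"
    and t: "0 \<le> t" "t < 1" "t * num_radius_L T \<le> 1" and e: "0 < e" "e < 1"
  shows "(1 - t * num_radius_L T) * ((1 - e) + t * (1 - 3*e)) \<le> 1 + t\<^sup>2"
proof -
  define \<omega> where "\<omega> = num_radius_L T"
  have L1: "\<And>x y. norm (T x - T y) \<le> norm (x - y)" using lip1[OF Lip] .
  obtain x y where xy: "x \<noteq> y" "(1 - e) * norm (x - y) < norm (T x - T y)"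
    using lipnear[OF Lip(2) nt e(1)] by blast
  obtain f a z l where fz: "bounded_linear f" "onorm f = 1" "norm z \<le> 1" "f z > 1 - e" "l > 0"
    "\<bar>f (T (a + l *\<^sub>R z) - T a)\<bar> > (1 - 3*e) * l"
    using lush_step[OF lush L1 xy e] by blast
  interpret f: bounded_linear f by (rule fz(1))
  have fle: "\<And>z. f z \<le> norm z" using onorm[OF fz(1)] fz(2) by (metis abs_le_D1 mult_1 real_norm_def)
  define q where "q = a"
  define d where "d = l *\<^sub>R z"
  define D where "D = T (q + d) - T q"
  define s where "s = (if f D \<ge> 0 then t else - t)"
  have sabs: "\<bar>s\<bar> = t" using t unfolding s_def by auto
  have sD: "s * f D = t * \<bar>f D\<bar>" unfolding s_def by auto
  define g where "g d' = d + s *\<^sub>R (T (q + d') - T q)" for d'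
  have "\<exists>!x. g x = x"
  proof (rule banach_fix_type[of t])
    show "\<forall>x y. dist (g x) (g y) \<le> t * dist x y"
    proof (intro allI)
      fix x y
      have "g x - g y = s *\<^sub>R (T (q + x) - T (q + y))" unfolding g_def by (simp add: algebra_simps)
      then have "dist (g x) (g y) = t * norm (T (q + x) - T (q + y))" using sabs by (simp add: dist_norm)
      also have "\<dots> \<le> t * norm ((q + x) - (q + y))" using L1[of "q + x" "q + y"] t by (simp add: mult_left_mono)
      finally show "dist (g x) (g y) \<le> t * dist x y" by (simp add: dist_norm)
    qed
  qed (use t in auto)
  then obtain d' where d': "g d' = d'" by blast
  define N where "N = norm d'"
  have low: "(1 - t * \<omega>) * N \<le> norm d"
  proof -
    have "(1 - \<bar>s\<bar> * num_radius_L T) * norm ((q + d') - q) \<le> norm (((q + d') - q) - s *\<^sub>R (T (q + d') - T q))"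
      by (rule lowerb[OF L1 nt])
    moreover have "((q + d') - q) - s *\<^sub>R (T (q + d') - T q) = d" using d' unfolding g_def
      by (metis add_diff_cancel_left' diff_add_cancel)
    ultimately show ?thesis using sabs unfolding N_def \<omega>_def by simp
  qed
  have nd: "norm d \<le> l" unfolding d_def using fz(3,5) by (simp add: mult_left_le)
  have fd: "f d \<ge> l * (1 - e)" unfolding d_def using fz(4,5) by (simp add: f.scaleR)
  have fD: "t * \<bar>f D\<bar> \<ge> t * ((1 - 3*e) * l)" using fz(6) t unfolding D_def q_def d_def
    by (simp add: mult_left_mono)
  have dd: "d' - d = s *\<^sub>R (T (q + d') - T q)" using d' unfolding g_def by (metis add_diff_cancel_left')
  have ndd: "norm (d' - d) \<le> t * N"
    using dd sabs L1[of "q + d'" q] t unfolding N_def by (simp add: mult_left_mono)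
  have err: "\<bar>s * f (T (q + d') - T (q + d))\<bar> \<le> t * (t * N)"
  proof -
    have "\<bar>f (T (q + d') - T (q + d))\<bar> \<le> norm (T (q + d') - T (q + d))"
      using onorm[OF fz(1)] fz(2) by (metis mult_1 real_norm_def)
    also have "\<dots> \<le> norm (d' - d)" using L1[of "q + d'" "q + d"] by simp
    also have "\<dots> \<le> t * N" by (rule ndd)
    finally show ?thesis using sabs t by (simp add: abs_mult mult_left_mono)
  qed
  have "f d' = f d + s * f D + s * f (T (q + d') - T (q + d))"
  proof -
    have "d' = d + s *\<^sub>R D + s *\<^sub>R (T (q + d') - T (q + d))"
      using dd unfolding D_def by (simp add: algebra_simps)
    then show ?thesis by (metis f.add f.scaleR real_scaleR_def)
  qed
  then have "f d' \<ge> l * (1 - e) + t * ((1 - 3*e) * l) - t * (t * N)" using fd fD sD err by linarith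
  moreover have "f d' \<le> N" using fle unfolding N_def .
  ultimately have A: "l * ((1 - e) + t * (1 - 3*e)) \<le> (1 + t\<^sup>2) * N" by (simp add: algebra_simps power2_eq_square)
  have p: "0 \<le> 1 - t * \<omega>" using t \<omega>_def by simp
  have "(1 - t * \<omega>) * (l * ((1 - e) + t * (1 - 3*e))) \<le> (1 - t * \<omega>) * ((1 + t\<^sup>2) * N)"
    by (rule mult_left_mono[OF A p])
  also have "\<dots> = (1 + t\<^sup>2) * ((1 - t * \<omega>) * N)" by simp
  also have "\<dots> \<le> (1 + t\<^sup>2) * l" using low nd by (intro mult_left_mono) auto
  finally have "l * ((1 - t * \<omega>) * ((1 - e) + t * (1 - 3*e))) \<le> l * (1 + t\<^sup>2)" by (simp add: algebra_simps)
  then show ?thesis using fz(5) unfolding \<omega>_def by simp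
qed


lemma omega_one:
  fixes T :: "'a::banach \<Rightarrow> 'a"
  assumes lush: "lush TYPE('a)" and nt: "\<exists>x::'a. x \<noteq> 0"
    and Lip: "T \<in> Lip0" "lip_norm T = 1"
  shows "num_radius_L T = 1"
proof -
  define w where "w = num_radius_L T"
  have L1: "\<And>x y. norm (T x - T y) \<le> norm (x - y)" using lip1[OF Lip] .
  have w1: "w \<le> 1" and w0: "0 \<le> w" using omega_props[OF L1 nt] w_def by auto
  show ?thesis
  proof (rule ccontr)
    assume "num_radius_L T \<noteq> 1"
    then have wl: "w < 1" using w1 w_def by simp
    define t where "t = (1 - w) / 4"
    define e where "e = t\<^sup>2 / 8"
    have t0: "0 < t" "t < 1" "t \<le> 1/4" using wl w0 unfolding t_def by auto
    have "t * w \<le> 1" using mult_le_one[of t w] t0 w0 w1 by simp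
    note t = t0(1,2) this t0(3)
    have "t * t \<le> 1" using mult_le_one[of t t] t by simp
    then have e: "0 < e" "e < 1" using t unfolding e_def by (auto simp: power2_eq_square)
    have K: "(1 - t * w) * ((1 - e) + t * (1 - 3*e)) \<le> 1 + t\<^sup>2"
      using key[OF lush nt Lip, of t e] t e w_def by simp
    have eq: "(1 - t * w) * ((1 - e) + t * (1 - 3*e)) = 1 + t\<^sup>2 + t\<^sup>2 * (3 - w) - e * ((1 + 3*t) * (1 - t*w))"
    proof -
      have h: "t * (1 - w) = 4 * t\<^sup>2" unfolding t_def by (simp add: power2_eq_square)
      have "(1 - t * w) * ((1 - e) + t * (1 - 3*e)) = (1 - t*w) * (1 + t) - e * ((1 + 3*t) * (1 - t*w))"
        by (simp add: algebra_simps)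
      moreover have "(1 - t*w) * (1 + t) = 1 + t\<^sup>2 + t\<^sup>2 * (3 - w)"
        using h by (simp add: algebra_simps power2_eq_square)
      ultimately show ?thesis by simp
    qed
    have b1: "(1 + 3*t) * (1 - t*w) \<le> 2"
    proof -
      have "(1 + 3*t) \<le> 2" using t by simp
      moreover have "1 - t*w \<le> 1" using t w0 by simp
      moreover have "0 \<le> 1 - t*w" using t by simp
      ultimately show ?thesis using mult_mono[of "1+3*t" 2 "1 - t*w" 1] t by simp
    qed
    have "e * ((1 + 3*t) * (1 - t*w)) \<le> e * 2" using b1 e by (simp add: mult_left_mono)
    moreover have "t\<^sup>2 * (3 - w) \<ge> t\<^sup>2 * 2" using w1 by (simp add: mult_left_mono)
    moreover have "e * 2 < t\<^sup>2 * 2" using t unfolding e_def by simp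
    ultimately show False using K eq by linarith
  qed
qed

lemma id_lip:
  assumes nt: "\<exists>x::'a::real_normed_vector. x \<noteq> 0"
  shows "(\<lambda>x::'a. x) \<in> Lip0" "lip_norm (\<lambda>x::'a. x) = 1"
proof -
  show "(\<lambda>x::'a. x) \<in> Lip0" unfolding Lip0_def
    by (auto intro!: exI[of _ 1] lipschitz_onI)
  obtain x0 :: 'a where "x0 \<noteq> 0" using nt by blast
  have "{norm (x - y) / norm (x - y) | x y :: 'a. x \<noteq> y} = {1}"
    using \<open>x0 \<noteq> 0\<close> by auto
  then show "lip_norm (\<lambda>x::'a. x) = 1" unfolding lip_norm_def by simp
qed

theorem theorem2p7:
  assumes nontriv: "\<exists>x::'a::banach. x \<noteq> 0"
    and "lush TYPE('a)"
  shows "lip_num_index TYPE('a) = 1"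
proof -
  have "{num_radius_L T | T :: 'a \<Rightarrow> 'a. T \<in> Lip0 \<and> lip_norm T = 1} = {1}"
  proof
    show "{num_radius_L T | T :: 'a \<Rightarrow> 'a. T \<in> Lip0 \<and> lip_norm T = 1} \<subseteq> {1}"
      using omega_one[OF assms(2) nontriv] by auto
    show "{1} \<subseteq> {num_radius_L T | T :: 'a \<Rightarrow> 'a. T \<in> Lip0 \<and> lip_norm T = 1}"
      using omega_one[OF assms(2) nontriv] id_lip[OF nontriv] by force
  qed
  then show ?thesis unfolding lip_num_index_def by simp
qed

end
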